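(* For each of the three games with payoff matrices $$A_1=\begin{pmatrix}0&-3&3\\2&0&-2\\-1&1&0\end{pmatrix},\quad A_2=\begin{pmatrix}0&-2&3\\2&0&-1\\-3&1&0\end{pmatrix},\quad A_3=\begin{pmatrix}0&-1&3\\2&0&-3\\-2&1&0\end{pmatrix},$$ the IBR dynamics has a unique rest point in the interior of $\Delta$, and this rest point is repelling: the Jacobian of the dynamics restricted to $\Delta$ (in two affine coordinates) at this rest point has two eigenvalues with positive real parts. For $A_1$ the interior rest point is $(\tfrac13,\tfrac13,\tfrac13)$ and the eigenvalues are $\frac{1\pm 2i\sqrt{26}}{27}$.
   Context: Let $n\ge 2$ and consider a symmetric two-player game with strategy set $S=\{1,\dots,n\}$ and payoff matrix $A=(\pi_{ij})_{i,j\in S}$, where $\pi_{ij}\in\mathbb{R}$ is the payoff of a player using strategy $i$ against an opponent using strategy $j$. The state space is the simplex $\Delta=\{x\in\mathbb{R}^n: x_i\ge 0,\ \sum_i x_i=1\}$, where $x_i$ is the population share using strategy $i$. The imitate-the-better-realization (IBR) dynamics is the ODE on $\Delta$ $$\dot x_i = x_i\sum_{j=1}^n\sum_{k=1}^n\sum_{m=1}^n x_jx_kx_m\big(\mathbf 1\{\pi_{jk}<\pi_{im}\}-\mathbf 1\{\pi_{jk}>\pi_{im}\}\big),\quad i\in S.$$ Here $n=3$. *)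

theory Defs
  imports "HOL-Analysis.Analysis"
begin

text \<open>Strategies 1,2,3 are the indices of the numeral type 3 (components x$1, x$2, x$3).
  A payoff matrix is A :: real^3^3 with A$i$j the payoff of strategy i against j.\<close>

definition ibr :: "real^3^3 \<Rightarrow> real^3 \<Rightarrow> real^3" where
  "ibr A x = (\<chi> i. x$i * (\<Sum>j\<in>UNIV. \<Sum>k\<in>UNIV. \<Sum>m\<in>UNIV.
       x$j * x$k * x$m *
       ((if A$j$k < A$i$m then 1 else 0) - (if A$j$k > A$i$m then 1 else 0))))"

definition simplex_interior :: "real^3 \<Rightarrow> bool" where
  "simplex_interior x \<longleftrightarrow> (\<forall>i. x$i > 0) \<and> (\<Sum>i\<in>UNIV. x$i) = 1"

definition rest_point :: "real^3^3 \<Rightarrow> real^3 \<Rightarrow> bool" where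
  "rest_point A x \<longleftrightarrow> ibr A x = 0"

definition lift :: "real^2 \<Rightarrow> real^3" where
  "lift y = vector [y$1, y$2, 1 - y$1 - y$2]"

definition coords :: "real^3 \<Rightarrow> real^2" where
  "coords x = vector [x$1, x$2]"

definition ibr_aff :: "real^3^3 \<Rightarrow> real^2 \<Rightarrow> real^2" where
  "ibr_aff A y = vector [ibr A (lift y) $ 1, ibr A (lift y) $ 2]"

definition cmat :: "real^2^2 \<Rightarrow> complex^2^2" where
  "cmat J = (\<chi> i j. complex_of_real (J$i$j))"

definition is_eigenvalue :: "real^2^2 \<Rightarrow> complex \<Rightarrow> bool" where
  "is_eigenvalue J z \<longleftrightarrow> (\<exists>v::complex^2. v \<noteq> 0 \<and> cmat J *v v = z *s v)"

definition is_jacobian_at :: "real^3^3 \<Rightarrow> real^3 \<Rightarrow> real^2^2 \<Rightarrow> bool" where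
  "is_jacobian_at A x J \<longleftrightarrow> (ibr_aff A has_derivative (\<lambda>h. J *v h)) (at (coords x))"

definition repelling :: "real^3^3 \<Rightarrow> real^3 \<Rightarrow> bool" where
  "repelling A x \<longleftrightarrow> (\<exists>J. is_jacobian_at A x J \<and> (\<forall>z. is_eigenvalue J z \<longrightarrow> Re z > 0))"

definition A1 :: "real^3^3" where
  "A1 = vector [vector [0, -3, 3], vector [2, 0, -2], vector [-1, 1, 0]]"
definition A2 :: "real^3^3" where
  "A2 = vector [vector [0, -2, 3], vector [2, 0, -1], vector [-3, 1, 0]]"
definition A3 :: "real^3^3" where
  "A3 = vector [vector [0, -1, 3], vector [2, 0, -3], vector [-2, 1, 0]]"

end

theory Submission
  imports Defs
begin

lemma mono_bd: "0 \<le> (t::real) \<Longrightarrow> t \<le> h \<Longrightarrow> 0 \<le> w \<Longrightarrow> w \<le> k \<Longrightarrow> t^i * w^j \<le> h^i * k^j"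
  by (intro mult_mono power_mono) auto

lemma mono_nn: "0 \<le> (t::real) \<Longrightarrow> 0 \<le> w \<Longrightarrow> 0 \<le> t^i * w^j"
  by simp

lemma inv_pow_less: "0 < (v::real) \<Longrightarrow> v < w \<Longrightarrow> 0 < c \<Longrightarrow> 0 < k \<Longrightarrow> c / w^k < c / v^k"
  by (intro divide_strict_left_mono power_strict_mono) auto

lemma pow_le_mono: "0 < (v::real) \<Longrightarrow> v < w \<Longrightarrow> 0 \<le> c \<Longrightarrow> c * v^k \<le> c * w^k"
  by (intro mult_left_mono power_mono) auto

lemma vec_nth_deriv [derivative_intros]: "((\<lambda>y. y $ i) has_derivative (\<lambda>h. h $ i)) F"
  using bounded_linear_imp_has_derivative[OF bounded_linear_vec_nth] .

lemma deriv2: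
  fixes f :: "real^2 \<Rightarrow> real^2" and M :: "real^2^2"
  assumes "((\<lambda>y. f y $ 1) has_derivative (\<lambda>h. M$1$1 * h$1 + M$1$2 * h$2)) (at a)"
    "((\<lambda>y. f y $ 2) has_derivative (\<lambda>h. M$2$1 * h$1 + M$2$2 * h$2)) (at a)"
  shows "(f has_derivative (\<lambda>h. M *v h)) (at a)"
proof -
  have e: "(\<lambda>h. (M *v h) $ i) = (\<lambda>h. M$i$1 * h$1 + M$i$2 * h$2)" for i
    by (simp add: matrix_vector_mult_def sum_2)
  have "((\<lambda>y. f y $ i) has_derivative (\<lambda>h. (M *v h) $ i)) (at a)" for i
    using assms exhaust_2[of i] e by metis
  then show ?thesis
    apply (subst has_derivative_componentwise_within)
    apply (auto simp: Basis_vec_def cart_eq_inner_axis[symmetric])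
    done
qed

lemma eig_char:
  fixes J :: "real^2^2"
  assumes "is_eigenvalue J z"
  shows "z^2 - complex_of_real (J$1$1 + J$2$2) * z + complex_of_real (J$1$1*J$2$2 - J$1$2*J$2$1) = 0"
proof -
  obtain v :: "complex^2" where v: "v \<noteq> 0" "cmat J *v v = z *s v"
    using assms unfolding is_eigenvalue_def by blast
  define a where "a = complex_of_real (J$1$1)"
  define b where "b = complex_of_real (J$1$2)"
  define c where "c = complex_of_real (J$2$1)"
  define d where "d = complex_of_real (J$2$2)"
  have e1: "a * v$1 + b * v$2 = z * v$1" and e2: "c * v$1 + d * v$2 = z * v$2"
    using v(2) unfolding vec_eq_iff forall_2
    by (auto simp: matrix_vector_mult_def sum_2 cmat_def a_def b_def c_def d_def)
  have k1: "((a - z) * (d - z) - b * c) * v$1 = 0"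
  proof -
    have "((a - z) * (d - z) - b * c) * v$1 = (d - z) * (a * v$1 + b * v$2 - z * v$1) - b * (c * v$1 + d * v$2 - z * v$2)"
      by (simp add: algebra_simps)
    then show ?thesis using e1 e2 by simp
  qed
  have k2: "((a - z) * (d - z) - b * c) * v$2 = 0"
  proof -
    have "((a - z) * (d - z) - b * c) * v$2 = (a - z) * (c * v$1 + d * v$2 - z * v$2) - c * (a * v$1 + b * v$2 - z * v$1)"
      by (simp add: algebra_simps)
    then show ?thesis using e1 e2 by simp
  qed
  have "v$1 \<noteq> 0 \<or> v$2 \<noteq> 0" using v(1) unfolding vec_eq_iff forall_2 by auto
  then have "(a - z) * (d - z) - b * c = 0" using k1 k2 by auto
  then show ?thesis unfolding a_def b_def c_def d_def
    by (simp add: algebra_simps power2_eq_square)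
qed

lemma eig_re_pos:
  fixes J :: "real^2^2"
  assumes tr: "J$1$1 + J$2$2 > 0" and dt: "J$1$1*J$2$2 - J$1$2*J$2$1 > 0"
  shows "\<forall>z. is_eigenvalue J z \<longrightarrow> Re z > 0"
proof (intro allI impI)
  fix z assume "is_eigenvalue J z"
  from eig_char[OF this] 
  have ch: "z^2 - complex_of_real (J$1$1 + J$2$2) * z + complex_of_real (J$1$1*J$2$2 - J$1$2*J$2$1) = 0" .
  define T where "T = J$1$1 + J$2$2"
  define D where "D = J$1$1*J$2$2 - J$1$2*J$2$1"
  define x where "x = Re z"
  define y where "y = Im z"
  have re: "x^2 - y^2 - T * x + D = 0" and im: "2 * x * y - T * y = 0"
    using arg_cong[OF ch, of Re] arg_cong[OF ch, of Im]
    unfolding T_def[symmetric] D_def[symmetric] x_def y_def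
    by (simp_all add: power2_eq_square algebra_simps)
  have Tp: "T > 0" and Dp: "D > 0" using tr dt unfolding T_def D_def by auto
  show "Re z > 0"
  proof (cases "y = 0")
    case True
    then have e: "x^2 - T * x + D = 0" using re by simp
    show ?thesis
    proof (rule ccontr)
      assume "\<not> Re z > 0"
      then have "x \<le> 0" unfolding x_def by simp
      then have "T * x \<le> 0" using Tp by (simp add: mult_nonneg_nonpos)
      moreover have "x^2 \<ge> 0" by simp
      ultimately show False using e Dp by linarith
    qed
  next
    case False
    then have "2 * x - T = 0" using im by (simp add: algebra_simps)
    then show ?thesis using Tp unfolding x_def by simp
  qed
qed

lemma eig_intro:
  fixes J :: "real^2^2"
  assumes b: "J$1$2 \<noteq> 0"
    and ch: "z^2 - complex_of_real (J$1$1 + J$2$2) * z + complex_of_real (J$1$1*J$2$2 - J$1$2*J$2$1) = 0"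
  shows "is_eigenvalue J z"
proof -
  define v :: "complex^2" where "v = vector [complex_of_real (J$1$2), z - complex_of_real (J$1$1)]"
  have "v \<noteq> 0" using b unfolding v_def vec_eq_iff forall_2 by auto
  moreover have "cmat J *v v = z *s v"
    unfolding vec_eq_iff forall_2
  proof (intro conjI)
    show "(cmat J *v v) $ 1 = (z *s v) $ 1"
      by (simp add: matrix_vector_mult_def sum_2 cmat_def v_def algebra_simps)
    have "(cmat J *v v) $ 2 - (z *s v) $ 2 = - (z^2 - complex_of_real (J$1$1 + J$2$2) * z + complex_of_real (J$1$1*J$2$2 - J$1$2*J$2$1))"
      by (simp add: matrix_vector_mult_def sum_2 cmat_def v_def algebra_simps power2_eq_square)
    also have "\<dots> = 0" using ch by (simp only: neg_equal_0_iff_equal)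
    finally show "(cmat J *v v) $ 2 = (z *s v) $ 2" by simp
  qed
  ultimately show ?thesis unfolding is_eigenvalue_def by blast
qed

definition "F1_1 x1 x2 x3 = (- (x1^2 * x2) + x1^2 * x3 - x1 * x2^2 + x1 * x3^2 - x2^3 - x2^2 * x3 + x2 * x3^2 + x3^3 :: real)"
definition "F1_2 x1 x2 x3 = (x1^3 + x1^2 * x2 - x1^2 * x3 + x1 * x2^2 + 2 * x1 * x2 * x3 - x1 * x3^2 - x2^2 * x3 - x2 * x3^2 - x3^3 :: real)"
definition "F1_3 x1 x2 x3 = (- (x1^3) + x1^2 * x2 - x1^2 * x3 - x1 * x2^2 - x1 * x3^2 + x2^3 + x2^2 * x3 + x2 * x3^2 :: real)"
definition "J1_11 x1 x2 x3 = (- (x1^3) - 3 * x1^2 * x2 + x1^2 * x3 - x1 * x2^2 - 2 * x1 * x2 * x3 - x1 * x3^2 - x2^3 - x2^2 * x3 + x2 * x3^2 + x3^3 :: real)"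
definition "J1_12 x1 x2 x3 = (- (2 * x1^3) - 2 * x1^2 * x2 - 2 * x1^2 * x3 - 2 * x1 * x2^2 - 4 * x1 * x2 * x3 - 2 * x1 * x3^2 :: real)"
definition "J1_21 x1 x2 x3 = (4 * x1^2 * x2 + 2 * x2^3 + 4 * x2^2 * x3 + 2 * x2 * x3^2 :: real)"
definition "J1_22 x1 x2 x3 = (x1^3 + 3 * x1^2 * x2 - x1^2 * x3 + x1 * x2^2 + 6 * x1 * x2 * x3 - x1 * x3^2 + x2^3 - x2^2 * x3 + x2 * x3^2 - x3^3 :: real)"

definition "JM1 (y::real^2) = (vector [vector [J1_11 (y$1) (y$2) (1-y$1-y$2), J1_12 (y$1) (y$2) (1-y$1-y$2)],
   vector [J1_21 (y$1) (y$2) (1-y$1-y$2), J1_22 (y$1) (y$2) (1-y$1-y$2)]] :: real^2^2)"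

lemma ibr_A1: "ibr A1 x = vector [x$1 * F1_1 (x$1) (x$2) (x$3), x$2 * F1_2 (x$1) (x$2) (x$3), x$3 * F1_3 (x$1) (x$2) (x$3)]"
  unfolding vec_eq_iff forall_3
  by (simp add: ibr_def A1_def F1_1_def F1_2_def F1_3_def sum_3 algebra_simps power2_eq_square power3_eq_cube)

lemma jac1: "(ibr_aff A1 has_derivative (\<lambda>h. JM1 y *v h)) (at y)"
proof (rule deriv2)
  show "((\<lambda>y. ibr_aff A1 y $ 1) has_derivative (\<lambda>h. JM1 y $ 1 $ 1 * h $ 1 + JM1 y $ 1 $ 2 * h $ 2)) (at y)"
    unfolding ibr_aff_def ibr_A1 lift_def JM1_def F1_1_def J1_11_def J1_12_def
    apply simp
    apply (rule derivative_eq_intros refl | simp)+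
    apply (rule ext)
    apply (simp add: algebra_simps power2_eq_square power3_eq_cube)
    done
  show "((\<lambda>y. ibr_aff A1 y $ 2) has_derivative (\<lambda>h. JM1 y $ 2 $ 1 * h $ 1 + JM1 y $ 2 $ 2 * h $ 2)) (at y)"
    unfolding ibr_aff_def ibr_A1 lift_def JM1_def F1_2_def J1_21_def J1_22_def
    apply simp
    apply (rule derivative_eq_intros refl | simp)+
    apply (rule ext)
    apply (simp add: algebra_simps power2_eq_square power3_eq_cube)
    done
qed

lemma rest_iff1: assumes "simplex_interior x"
  shows "rest_point A1 x \<longleftrightarrow> F1_1 (x$1) (x$2) (x$3) = 0 \<and> F1_2 (x$1) (x$2) (x$3) = 0 \<and> F1_3 (x$1) (x$2) (x$3) = 0"
proof -
  have p: "x$1 > 0" "x$2 > 0" "x$3 > 0" using assms unfolding simplex_interior_def by auto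
  show ?thesis unfolding rest_point_def ibr_A1 vec_eq_iff forall_3 using p by simp
qed


definition p1 :: "real^3" where "p1 = vector [1/3, 1/3, 1/3]"

definition JA1 :: "real^2^2" where "JA1 = JM1 (vector [1/3, 1/3])"

lemma JA1_entries: "JA1$1$1 = -7/27" "JA1$1$2 = -14/27" "JA1$2$1 = 4/9" "JA1$2$2 = 1/3"
  by (simp_all add: JA1_def JM1_def J1_11_def J1_12_def J1_21_def J1_22_def power_divide)

lemma p1_int: "simplex_interior p1"
  unfolding simplex_interior_def p1_def forall_3 sum_3 by simp

lemma p1_rest: "rest_point A1 p1"
  unfolding rest_iff1[OF p1_int] by (simp add: p1_def F1_1_def F1_2_def F1_3_def power_divide)

lemma p1_coords: "coords p1 = vector [1/3, 1/3]"
  unfolding coords_def p1_def by simp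

lemma p1_jac: "is_jacobian_at A1 p1 JA1"
  unfolding is_jacobian_at_def p1_coords JA1_def by (rule jac1)

lemma p1_uniq: assumes xi: "simplex_interior x" and xr: "rest_point A1 x" shows "x = p1"
proof -
  have xp: "x$1 > 0" "x$2 > 0" "x$3 > 0" and xs: "x$1 + x$2 + x$3 = 1"
    using xi unfolding simplex_interior_def sum_3 by auto
  have F: "F1_1 (x$1) (x$2) (x$3) = 0" "F1_3 (x$1) (x$2) (x$3) = 0" using xr rest_iff1[OF xi] by auto
  have fa: "F1_1 a b c = (c - b) * (a^2 + a * (b + c) + (b + c)^2)" for a b c
    unfolding F1_1_def by algebra
  have "(x$1)^2 + x$1 * (x$2 + x$3) + (x$2 + x$3)^2 > 0" using xp by (simp add: add_pos_pos)
  then have e23: "x$3 = x$2" using F(1) unfolding fa by simp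
  have fb: "F1_3 a b b = (b - a) * (3 * b^2 + b * a + a^2)" for a b
    unfolding F1_3_def by algebra
  have "3 * (x$2)^2 + x$2 * x$1 + (x$1)^2 > 0" using xp by (simp add: add_pos_pos)
  then have e12: "x$1 = x$2" using F(2) unfolding e23 fb by simp
  have "x$2 = 1/3" using xs e12 e23 by simp
  then show ?thesis unfolding vec_eq_iff forall_3 p1_def using e12 e23 by simp
qed

lemma game1: "(\<exists>!x. simplex_interior x \<and> rest_point A1 x) \<and>
            (\<forall>x. simplex_interior x \<and> rest_point A1 x \<longrightarrow> repelling A1 x)"
proof -
  have "repelling A1 p1"
  proof -
    have "\<forall>z. is_eigenvalue JA1 z \<longrightarrow> Re z > 0" by (rule eig_re_pos) (simp_all add: JA1_entries)
    then show ?thesis using p1_jac unfolding repelling_def by blast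
  qed
  then show ?thesis using p1_int p1_rest p1_uniq by blast
qed

lemma eig_A1: "{z. is_eigenvalue JA1 z} =
   {(1 + 2 * \<i> * complex_of_real (sqrt 26)) / 27, (1 - 2 * \<i> * complex_of_real (sqrt 26)) / 27}"
proof -
  define z1 where "z1 = (1 + 2 * \<i> * complex_of_real (sqrt 26)) / 27"
  define z2 where "z2 = (1 - 2 * \<i> * complex_of_real (sqrt 26)) / 27"
  have s: "complex_of_real (sqrt 26) ^ 2 = 26"
    by (simp flip: of_real_power)
  have ii: "\<i>^2 = -1" by simp
  have pp: "(1 + 2*\<i>*S) * (1 - 2*\<i>*S) = 1 - 4 * \<i>^2 * S^2" for S :: complex
    by (simp add: algebra_simps power2_eq_square)
  have z12: "z1 * z2 = 105/729"
  proof -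
    have "z1 * z2 = ((1 + 2*\<i>*complex_of_real (sqrt 26)) * (1 - 2*\<i>*complex_of_real (sqrt 26))) / 729"
      unfolding z1_def z2_def by simp
    also have "\<dots> = 105/729" unfolding pp s ii by simp
    finally show ?thesis .
  qed
  have zs: "z1 + z2 = 2/27" unfolding z1_def z2_def by (simp add: field_simps)
  have ch: "z^2 - complex_of_real (JA1$1$1 + JA1$2$2) * z + complex_of_real (JA1$1$1*JA1$2$2 - JA1$1$2*JA1$2$1)
     = (z - z1) * (z - z2)" for z
  proof -
    have "z^2 - complex_of_real (JA1$1$1 + JA1$2$2) * z + complex_of_real (JA1$1$1*JA1$2$2 - JA1$1$2*JA1$2$1)
      = z^2 - (2/27) * z + 105/729" by (simp add: JA1_entries)
    also have "\<dots> = z^2 - (z1 + z2) * z + z1 * z2" by (simp only: z12 zs)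
    also have "\<dots> = (z - z1) * (z - z2)" by (simp add: algebra_simps power2_eq_square)
    finally show ?thesis .
  qed
  show ?thesis
  proof (intro set_eqI iffI)
    fix z assume "z \<in> {z. is_eigenvalue JA1 z}"
    then have "(z - z1) * (z - z2) = 0" using eig_char[of JA1 z] ch by simp
    then show "z \<in> {(1 + 2 * \<i> * complex_of_real (sqrt 26)) / 27, (1 - 2 * \<i> * complex_of_real (sqrt 26)) / 27}"
      unfolding z1_def[symmetric] z2_def[symmetric] by auto
  next
    fix z assume "z \<in> {(1 + 2 * \<i> * complex_of_real (sqrt 26)) / 27, (1 - 2 * \<i> * complex_of_real (sqrt 26)) / 27}"
    then have "(z - z1) * (z - z2) = 0" unfolding z1_def z2_def by auto
    then show "z \<in> {z. is_eigenvalue JA1 z}" using eig_intro[of JA1 z] ch by (simp add: JA1_entries)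
  qed
qed

definition "F2_1 x1 x2 x3 = (- (x1^2 * x2) + x1^2 * x3 - x1 * x2^2 + 2 * x1 * x2 * x3 + x1 * x3^2 - x2^3 - x2^2 * x3 + x2 * x3^2 + x3^3 :: real)"
definition "F2_2 x1 x2 x3 = (x1^3 + x1^2 * x2 - x1^2 * x3 + x1 * x2^2 + 2 * x1 * x2 * x3 + x1 * x3^2 - x2^2 * x3 - x2 * x3^2 - x3^3 :: real)"
definition "F2_3 x1 x2 x3 = (- (x1^3) - x1^2 * x2 - x1^2 * x3 - x1 * x2^2 - 2 * x1 * x2 * x3 - x1 * x3^2 + x2^3 + x2^2 * x3 + x2 * x3^2 :: real)"
definition "J2_11 x1 x2 x3 = (- (x1^3) - 5 * x1^2 * x2 + x1^2 * x3 - x1 * x2^2 + 2 * x1 * x2 * x3 - x1 * x3^2 - x2^3 - x2^2 * x3 + x2 * x3^2 + x3^3 :: real)"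
definition "J2_12 x1 x2 x3 = (- (2 * x1^3) - 4 * x1^2 * x2 - 2 * x1 * x2^2 - 4 * x1 * x2 * x3 - 2 * x1 * x3^2 :: real)"
definition "J2_21 x1 x2 x3 = (4 * x1^2 * x2 - 4 * x1 * x2 * x3 + 2 * x2^3 + 4 * x2^2 * x3 + 4 * x2 * x3^2 :: real)"
definition "J2_22 x1 x2 x3 = (x1^3 + 3 * x1^2 * x2 - x1^2 * x3 + x1 * x2^2 + 2 * x1 * x2 * x3 + x1 * x3^2 + x2^3 - x2^2 * x3 + x2 * x3^2 - x3^3 :: real)"
definition "R2 v = (- (v^7) - v^6 - 14 * v^5 - 8 * v^4 + 2 * v^3 + 26 * v^2 + 17 * v + 3 :: real)"
definition "a2 v = (2 * v^2 - 4 * v - 2 :: real)"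
definition "b2 v = (v^4 + v^3 + 2 * v^2 - 3 * v - 1 :: real)"

definition "JM2 (y::real^2) = (vector [vector [J2_11 (y$1) (y$2) (1-y$1-y$2), J2_12 (y$1) (y$2) (1-y$1-y$2)],
   vector [J2_21 (y$1) (y$2) (1-y$1-y$2), J2_22 (y$1) (y$2) (1-y$1-y$2)]] :: real^2^2)"

lemma ibr_A2: "ibr A2 x = vector [x$1 * F2_1 (x$1) (x$2) (x$3), x$2 * F2_2 (x$1) (x$2) (x$3), x$3 * F2_3 (x$1) (x$2) (x$3)]"
  unfolding vec_eq_iff forall_3
  by (simp add: ibr_def A2_def F2_1_def F2_2_def F2_3_def sum_3 algebra_simps power2_eq_square power3_eq_cube)

lemma jac2: "(ibr_aff A2 has_derivative (\<lambda>h. JM2 y *v h)) (at y)"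
proof (rule deriv2)
  show "((\<lambda>y. ibr_aff A2 y $ 1) has_derivative (\<lambda>h. JM2 y $ 1 $ 1 * h $ 1 + JM2 y $ 1 $ 2 * h $ 2)) (at y)"
    unfolding ibr_aff_def ibr_A2 lift_def JM2_def F2_1_def J2_11_def J2_12_def
    apply simp
    apply (rule derivative_eq_intros refl | simp)+
    apply (rule ext)
    apply (simp add: algebra_simps power2_eq_square power3_eq_cube)
    done
  show "((\<lambda>y. ibr_aff A2 y $ 2) has_derivative (\<lambda>h. JM2 y $ 2 $ 1 * h $ 1 + JM2 y $ 2 $ 2 * h $ 2)) (at y)"
    unfolding ibr_aff_def ibr_A2 lift_def JM2_def F2_2_def J2_21_def J2_22_def
    apply simp
    apply (rule derivative_eq_intros refl | simp)+
    apply (rule ext)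
    apply (simp add: algebra_simps power2_eq_square power3_eq_cube)
    done
qed

lemma hom2_1: "F2_1 (t*x1) (t*x2) (t*x3) = t^3 * F2_1 x1 x2 x3" unfolding F2_1_def by algebra
lemma hom2_2: "F2_2 (t*x1) (t*x2) (t*x3) = t^3 * F2_2 x1 x2 x3" unfolding F2_2_def by algebra
lemma hom2_3: "F2_3 (t*x1) (t*x2) (t*x3) = t^3 * F2_3 x1 x2 x3" unfolding F2_3_def by algebra
lemma homJ2_11: "J2_11 (t*x1) (t*x2) (t*x3) = t^3 * J2_11 x1 x2 x3" unfolding J2_11_def by algebra
lemma homJ2_12: "J2_12 (t*x1) (t*x2) (t*x3) = t^3 * J2_12 x1 x2 x3" unfolding J2_12_def by algebra
lemma homJ2_21: "J2_21 (t*x1) (t*x2) (t*x3) = t^3 * J2_21 x1 x2 x3" unfolding J2_21_def by algebra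
lemma homJ2_22: "J2_22 (t*x1) (t*x2) (t*x3) = t^3 * J2_22 x1 x2 x3" unfolding J2_22_def by algebra
lemma euler2: "x1 * F2_1 x1 x2 x3 + x2 * F2_2 x1 x2 x3 + x3 * F2_3 x1 x2 x3 = 0" unfolding F2_1_def F2_2_def F2_3_def by algebra
lemma I1_2: "R2 v = (- (2 * u^2 * v^2) + 4 * u^2 * v + 2 * u^2 + u * v^4 - u * v^3 + 8 * u * v^2 - 5 * u * v - 3 * u + 2 * v^3 + 4 * v^2 + 8 * v + 2) * F2_1 u v 1 + (- (2 * u * v^3) + 6 * u * v^2 - 2 * u * v - 2 * u + v^5 - 2 * v^4 + 9 * v^3 - 9 * v^2 - 6 * v - 1) * F2_2 u v 1" unfolding R2_def F2_1_def F2_2_def F2_3_def by ((simp only: power_one mult_1_right mult_1_left)?, algebra)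
lemma I2_2: "a2 v * u + b2 v = (- (u * v) + u - 2) * F2_1 u v 1 + (- (v^2) + 2 * v - 1) * F2_2 u v 1" unfolding a2_def b2_def F2_1_def F2_2_def F2_3_def by ((simp only: power_one mult_1_right mult_1_left)?, algebra)
lemma I3_2: "(a2 v)^2 * F2_1 u v 1 = (1-v)^2 * R2 v + (a2 v * u + b2 v) * (- (2 * u * v^3) + 6 * u * v^2 - 2 * u * v - 2 * u + v^5 - 2 * v^4 + 9 * v^3 - 9 * v^2 - 6 * v - 1)" unfolding a2_def b2_def R2_def F2_1_def F2_2_def F2_3_def by ((simp only: power_one mult_1_right mult_1_left)?, algebra)
definition "g2 v = (3 / v^4 + 17 / v^3 + 26 / v^2 + 2 / v^1 + -8 + -14 * v^1 + -1 * v^2 + -1 * v^3 :: real)"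
lemma Rg2: "0 < v \<Longrightarrow> R2 v = v^4 * g2 v"
  unfolding R2_def g2_def by (simp add: field_simps power_numeral_reduce)
lemma gdec2: assumes vw: "0 < (v::real)" "v < w" shows "g2 w < g2 v"
proof -
  have d0: "3 / w^4 < 3 / v^4" by (rule inv_pow_less) (use vw in auto)
  have d1: "17 / w^3 < 17 / v^3" by (rule inv_pow_less) (use vw in auto)
  have d2: "26 / w^2 < 26 / v^2" by (rule inv_pow_less) (use vw in auto)
  have d3: "2 / w^1 < 2 / v^1" by (rule inv_pow_less) (use vw in auto)
  have d5: "14 * v^1 \<le> 14 * w^1" by (rule pow_le_mono) (use vw in auto)
  have d6: "1 * v^2 \<le> 1 * w^2" by (rule pow_le_mono) (use vw in auto)
  have d7: "1 * v^3 \<le> 1 * w^3" by (rule pow_le_mono) (use vw in auto)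
  show ?thesis unfolding g2_def using d0 d1 d2 d3 d5 d6 d7 by linarith
qed

lemma root_unique2: assumes "0 < (v::real)" "0 < w" "R2 v = 0" "R2 w = 0" shows "v = w"
proof -
  have "g2 v = 0" "g2 w = 0" using assms Rg2 by auto
  then show ?thesis using gdec2 assms(1,2) by (metis less_irrefl linorder_neqE_linordered_idom)
qed

lemma sa2:
  assumes "(31/50) \<le> (u::real)" "u \<le> (69/100)" "(123/100) \<le> (v::real)" "v \<le> (31/25)"
  shows "a2 v < 0"
proof -
  define t where "t = (u - (31/50)) / (7/100)"
  define w where "w = (v - (123/100)) / (1/100)"
  have t: "0 \<le> t" "t \<le> 1" using assms by (auto simp: t_def field_simps)
  have w: "0 \<le> w" "w \<le> 1" using assms by (auto simp: w_def field_simps)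
  have u: "u = (31/50) + (7/100) * t" and v: "v = (123/100) + (1/100) * w" by (simp_all add: t_def w_def field_simps)
  have eq: "a2 v = ((-19471/5000)) + ((23/2500)) * (w) + ((1/5000)) * (w^2)"
    unfolding u v a2_def by ((simp only: power_one mult_1_right mult_1_left)?, algebra)
  have m1: "w \<le> 1" using mono_bd[OF t w, of 0 1] by simp
  have m2: "w^2 \<le> 1" using mono_bd[OF t w, of 0 2] by simp
  show ?thesis using eq m1 m2 by linarith
qed
lemma sbl2:
  assumes "(31/50) \<le> (u::real)" "u \<le> (69/100)" "(123/100) \<le> (v::real)" "v \<le> (31/25)"
  shows "0 < b2 v + (31/50) * a2 v"
proof -
  define t where "t = (u - (31/50)) / (7/100)"
  define w where "w = (v - (123/100)) / (1/100)"
  have t: "0 \<le> t" "t \<le> 1" using assms by (auto simp: t_def field_simps)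
  have w: "0 \<le> w" "w \<le> 1" using assms by (auto simp: w_def field_simps)
  have u: "u = (31/50) + (7/100) * t" and v: "v = (123/100) + (1/100) * w" by (simp_all add: t_def w_def field_simps)
  have eq: "b2 v + (31/50) * a2 v = ((7112941/100000000)) + ((1809071/12500000)) * (w) + ((80037/50000000)) * (w^2) + ((37/6250000)) * (w^3) + ((1/100000000)) * (w^4)"
    unfolding u v a2_def b2_def by ((simp only: power_one mult_1_right mult_1_left)?, algebra)
  have m1: "0 \<le> w" using mono_nn[OF t(1) w(1), of 0 1] by simp
  have m2: "0 \<le> w^2" using mono_nn[OF t(1) w(1), of 0 2] by simp
  have m3: "0 \<le> w^3" using mono_nn[OF t(1) w(1), of 0 3] by simp
  have m4: "0 \<le> w^4" using mono_nn[OF t(1) w(1), of 0 4] by simp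
  show ?thesis using eq m1 m2 m3 m4 by linarith
qed
lemma sbh2:
  assumes "(31/50) \<le> (u::real)" "u \<le> (69/100)" "(123/100) \<le> (v::real)" "v \<le> (31/25)"
  shows "b2 v + (69/100) * a2 v < 0"
proof -
  define t where "t = (u - (31/50)) / (7/100)"
  define w where "w = (v - (123/100)) / (1/100)"
  have t: "0 \<le> t" "t \<le> 1" using assms by (auto simp: t_def field_simps)
  have w: "0 \<le> w" "w \<le> 1" using assms by (auto simp: w_def field_simps)
  have u: "u = (31/50) + (7/100) * t" and v: "v = (123/100) + (1/100) * w" by (simp_all add: t_def w_def field_simps)
  have eq: "b2 v + (69/100) * a2 v = ((-20146459/100000000)) + ((1817121/12500000)) * (w) + ((80737/50000000)) * (w^2) + ((37/6250000)) * (w^3) + ((1/100000000)) * (w^4)"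
    unfolding u v a2_def b2_def by ((simp only: power_one mult_1_right mult_1_left)?, algebra)
  have m1: "w \<le> 1" using mono_bd[OF t w, of 0 1] by simp
  have m2: "w^2 \<le> 1" using mono_bd[OF t w, of 0 2] by simp
  have m3: "w^3 \<le> 1" using mono_bd[OF t w, of 0 3] by simp
  have m4: "w^4 \<le> 1" using mono_bd[OF t w, of 0 4] by simp
  show ?thesis using eq m1 m2 m3 m4 by linarith
qed
lemma sT2:
  assumes "(31/50) \<le> (u::real)" "u \<le> (69/100)" "(123/100) \<le> (v::real)" "v \<le> (31/25)"
  shows "0 < J2_11 u v 1 + J2_22 u v 1"
proof -
  define t where "t = (u - (31/50)) / (7/100)"
  define w where "w = (v - (123/100)) / (1/100)"
  have t: "0 \<le> t" "t \<le> 1" using assms by (auto simp: t_def field_simps)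
  have w: "0 \<le> w" "w \<le> 1" using assms by (auto simp: w_def field_simps)
  have u: "u = (31/50) + (7/100) * t" and v: "v = (123/100) + (1/100) * w" by (simp_all add: t_def w_def field_simps)
  have eq: "J2_11 u v 1 + J2_22 u v 1 = ((48093/31250)) + ((-1511/125000)) * (w) + ((-1/5000)) * (w^2) + ((16359/125000)) * (t) + ((133/125000)) * (t * w) + ((-6027/500000)) * (t^2) + ((-49/500000)) * (t^2 * w)"
    unfolding u v J2_11_def J2_12_def J2_21_def J2_22_def by ((simp only: power_one mult_1_right mult_1_left)?, algebra)
  have m1: "w \<le> 1" using mono_bd[OF t w, of 0 1] by simp
  have m2: "w^2 \<le> 1" using mono_bd[OF t w, of 0 2] by simp
  have m3: "0 \<le> t" using mono_nn[OF t(1) w(1), of 1 0] by simp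
  have m4: "0 \<le> t * w" using mono_nn[OF t(1) w(1), of 1 1] by simp
  have m5: "t^2 \<le> 1" using mono_bd[OF t w, of 2 0] by simp
  have m6: "t^2 * w \<le> 1" using mono_bd[OF t w, of 2 1] by simp
  show ?thesis using eq m1 m2 m3 m4 m5 m6 by linarith
qed
lemma sD2:
  assumes "(31/50) \<le> (u::real)" "u \<le> (69/100)" "(123/100) \<le> (v::real)" "v \<le> (31/25)"
  shows "0 < J2_11 u v 1 * J2_22 u v 1 - J2_12 u v 1 * J2_21 u v 1"
proof -
  define t where "t = (u - (31/50)) / (7/100)"
  define w where "w = (v - (123/100)) / (1/100)"
  have t: "0 \<le> t" "t \<le> 1" using assms by (auto simp: t_def field_simps)
  have w: "0 \<le> w" "w \<le> 1" using assms by (auto simp: w_def field_simps)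
  have u: "u = (31/50) + (7/100) * t" and v: "v = (123/100) + (1/100) * w" by (simp_all add: t_def w_def field_simps)
  have eq: "J2_11 u v 1 * J2_22 u v 1 - J2_12 u v 1 * J2_21 u v 1 = ((98757643775063/1000000000000)) + ((1094823842293/500000000000)) * (w) + ((17437150737/1000000000000)) * (w^2) + ((13026807/250000000000)) * (w^3) + ((-45319/1000000000000)) * (w^4) + ((-307/500000000000)) * (w^5) + ((-1/1000000000000)) * (w^6) + ((264454478463/20000000000)) * (t) + ((145708937479/500000000000)) * (t * w) + ((615586069/250000000000)) * (t * w^2) + ((2486113/250000000000)) * (t * w^3) + ((9471/500000000000)) * (t * w^4) + ((7/500000000000)) * (t * w^5) + ((287786230963/1000000000000)) * (t^2) + ((307979553/62500000000)) * (t^2 * w) + ((2831367/100000000000)) * (t^2 * w^2) + ((1323/25000000000)) * (t^2 * w^3) + ((-49/1000000000000)) * (t^2 * w^4) + ((3150211813/500000000000)) * (t^3) + ((44138269/500000000000)) * (t^3 * w) + ((37387/100000000000)) * (t^3 * w^2) + ((343/500000000000)) * (t^3 * w^3) + ((-97934389/1000000000000)) * (t^4) + ((-295323/500000000000)) * (t^4 * w) + ((-2401/1000000000000)) * (t^4 * w^2) + ((-722701/250000000000)) * (t^5) + ((-117649/1000000000000)) * (t^6)"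
    unfolding u v J2_11_def J2_12_def J2_21_def J2_22_def by ((simp only: power_one mult_1_right mult_1_left)?, algebra)
  have m1: "0 \<le> w" using mono_nn[OF t(1) w(1), of 0 1] by simp
  have m2: "0 \<le> w^2" using mono_nn[OF t(1) w(1), of 0 2] by simp
  have m3: "0 \<le> w^3" using mono_nn[OF t(1) w(1), of 0 3] by simp
  have m4: "w^4 \<le> 1" using mono_bd[OF t w, of 0 4] by simp
  have m5: "w^5 \<le> 1" using mono_bd[OF t w, of 0 5] by simp
  have m6: "w^6 \<le> 1" using mono_bd[OF t w, of 0 6] by simp
  have m7: "0 \<le> t" using mono_nn[OF t(1) w(1), of 1 0] by simp
  have m8: "0 \<le> t * w" using mono_nn[OF t(1) w(1), of 1 1] by simp
  have m9: "0 \<le> t * w^2" using mono_nn[OF t(1) w(1), of 1 2] by simp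
  have m10: "0 \<le> t * w^3" using mono_nn[OF t(1) w(1), of 1 3] by simp
  have m11: "0 \<le> t * w^4" using mono_nn[OF t(1) w(1), of 1 4] by simp
  have m12: "0 \<le> t * w^5" using mono_nn[OF t(1) w(1), of 1 5] by simp
  have m13: "0 \<le> t^2" using mono_nn[OF t(1) w(1), of 2 0] by simp
  have m14: "0 \<le> t^2 * w" using mono_nn[OF t(1) w(1), of 2 1] by simp
  have m15: "0 \<le> t^2 * w^2" using mono_nn[OF t(1) w(1), of 2 2] by simp
  have m16: "0 \<le> t^2 * w^3" using mono_nn[OF t(1) w(1), of 2 3] by simp
  have m17: "t^2 * w^4 \<le> 1" using mono_bd[OF t w, of 2 4] by simp
  have m18: "0 \<le> t^3" using mono_nn[OF t(1) w(1), of 3 0] by simp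
  have m19: "0 \<le> t^3 * w" using mono_nn[OF t(1) w(1), of 3 1] by simp
  have m20: "0 \<le> t^3 * w^2" using mono_nn[OF t(1) w(1), of 3 2] by simp
  have m21: "0 \<le> t^3 * w^3" using mono_nn[OF t(1) w(1), of 3 3] by simp
  have m22: "t^4 \<le> 1" using mono_bd[OF t w, of 4 0] by simp
  have m23: "t^4 * w \<le> 1" using mono_bd[OF t w, of 4 1] by simp
  have m24: "t^4 * w^2 \<le> 1" using mono_bd[OF t w, of 4 2] by simp
  have m25: "t^5 \<le> 1" using mono_bd[OF t w, of 5 0] by simp
  have m26: "t^6 \<le> 1" using mono_bd[OF t w, of 6 0] by simp
  show ?thesis using eq m1 m2 m3 m4 m5 m6 m7 m8 m9 m10 m11 m12 m13 m14 m15 m16 m17 m18 m19 m20 m21 m22 m23 m24 m25 m26 by linarith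
qed

lemma Rvl2: "R2 (123/100) > 0" by (simp add: R2_def power_divide)
lemma Rvh2: "R2 (31/25) < 0" by (simp add: R2_def power_divide)


lemma rest_iff2: assumes "simplex_interior x"
  shows "rest_point A2 x \<longleftrightarrow> F2_1 (x$1) (x$2) (x$3) = 0 \<and> F2_2 (x$1) (x$2) (x$3) = 0 \<and> F2_3 (x$1) (x$2) (x$3) = 0"
proof -
  have p: "x$1 > 0" "x$2 > 0" "x$3 > 0" using assms unfolding simplex_interior_def by auto
  show ?thesis unfolding rest_point_def ibr_A2 vec_eq_iff forall_3 using p by simp
qed

lemma game2: "(\<exists>!x. simplex_interior x \<and> rest_point A2 x) \<and>
            (\<forall>x. simplex_interior x \<and> rest_point A2 x \<longrightarrow> repelling A2 x)"
proof -
  have cR: "continuous_on {(123/100)..(31/25)} R2" unfolding R2_def by (intro continuous_intros)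
  obtain v0 where v0: "(123/100) \<le> v0" "v0 \<le> (31/25)" "R2 v0 = 0"
    using IVT2'[OF less_imp_le[OF Rvh2] less_imp_le[OF Rvl2] _ cR] by auto
  have av: "a2 v0 < 0" using sa2[of "(31/50)" v0] v0 by simp
  define u0 where "u0 = - b2 v0 / a2 v0"
  have abu: "a2 v0 * u0 + b2 v0 = 0" using av unfolding u0_def by (simp add: field_simps)
  have bl: "0 < b2 v0 + (31/50) * a2 v0" using sbl2[of "(31/50)" v0] v0 by simp
  have bh: "b2 v0 + (69/100) * a2 v0 < 0" using sbh2[of "(31/50)" v0] v0 by simp
  have ul: "(31/50) \<le> u0"
  proof (rule ccontr)
    assume "\<not> (31/50) \<le> u0"
    then have "u0 * a2 v0 > (31/50) * a2 v0" using av by (intro mult_strict_right_mono_neg) auto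
    then show False using abu bl by (simp add: algebra_simps)
  qed
  have uh: "u0 \<le> (69/100)"
  proof (rule ccontr)
    assume "\<not> u0 \<le> (69/100)"
    then have "u0 * a2 v0 < (69/100) * a2 v0" using av by (intro mult_strict_right_mono_neg) auto
    then show False using abu bh by (simp add: algebra_simps)
  qed
  have f1: "F2_1 u0 v0 1 = 0"
  proof -
    have "(a2 v0)^2 * F2_1 u0 v0 1 = 0" using I3_2[of v0 u0] abu v0(3) by simp
    then show ?thesis using av by simp
  qed
  have f2: "F2_2 u0 v0 1 = 0"
  proof -
    have "(1 - v0)^2 \<noteq> 0" using v0 by simp
    moreover have "a2 v0 * u0 + b2 v0 = - ((1 - v0)^2) * F2_2 u0 v0 1"
      using I2_2[of v0 u0] f1 by (simp add: power2_eq_square algebra_simps)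
    ultimately show ?thesis using abu by simp
  qed
  have f3: "F2_3 u0 v0 1 = 0" using euler2[of u0 v0 1] f1 f2 by simp
  have u0p: "u0 > 0" using ul by simp
  have v0p: "v0 > 0" using v0 by simp
  define s where "s = 1 + u0 + v0"
  have sp: "s > 0" using u0p v0p unfolding s_def by simp
  define t where "t = 1 / s"
  have tp: "t > 0" using sp unfolding t_def by simp
  define p :: "real^3" where "p = vector [t * u0, t * v0, t * 1]"
  have pc: "p$1 = t * u0" "p$2 = t * v0" "p$3 = t * 1" unfolding p_def by simp_all
  have tsum: "t * u0 + t * v0 + t * 1 = 1"
  proof -
    have "t * u0 + t * v0 + t * 1 = t * s" by (simp add: s_def algebra_simps)
    also have "\<dots> = 1" using sp by (simp add: t_def)
    finally show ?thesis .
  qed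
  have pint: "simplex_interior p"
    unfolding simplex_interior_def forall_3 sum_3 pc using tp u0p v0p tsum by simp
  have prest: "rest_point A2 p"
    unfolding rest_iff2[OF pint] pc hom2_1 hom2_2 hom2_3 using f1 f2 f3 by simp
  have uniq: "x = p" if xi: "simplex_interior x" and xr: "rest_point A2 x" for x
  proof -
    have xp: "x$1 > 0" "x$2 > 0" "x$3 > 0" and xs: "x$1 + x$2 + x$3 = 1"
      using xi unfolding simplex_interior_def sum_3 by auto
    define u where "u = x$1 / x$3"
    define v where "v = x$2 / x$3"
    have xe: "x$1 = x$3 * u" "x$2 = x$3 * v" "x$3 = x$3 * 1" using xp unfolding u_def v_def by simp_all
    have up: "u > 0" "v > 0" using xp unfolding u_def v_def by simp_all
    have F: "F2_1 u v 1 = 0" "F2_2 u v 1 = 0"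
    proof -
      have "F2_1 (x$3 * u) (x$3 * v) (x$3 * 1) = 0" "F2_2 (x$3 * u) (x$3 * v) (x$3 * 1) = 0"
        using xr unfolding rest_iff2[OF xi] using xe by (metis)+
      then show "F2_1 u v 1 = 0" "F2_2 u v 1 = 0" using xp unfolding hom2_1 hom2_2 by simp_all
    qed
    have "R2 v = 0" using I1_2[of v u] F by simp
    then have vv: "v = v0" using root_unique2[OF up(2) v0p _ v0(3)] by simp
    have "a2 v * u + b2 v = 0" using I2_2[of v u] F by simp
    then have uu: "u = u0" using av abu vv
      by (metis add_right_cancel mult_cancel_left less_irrefl)
    have "x$3 * s = 1" using xs xe unfolding s_def uu vv by (simp add: algebra_simps)
    then have x3: "x$3 = t" unfolding t_def using sp by (simp add: field_simps)
    show ?thesis unfolding vec_eq_iff forall_3 pc using xe x3 uu vv by simp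
  qed
  have rep: "repelling A2 p"
  proof -
    have cp: "coords p = vector [t * u0, t * v0]" unfolding coords_def pc by simp
    have p3: "1 - t * u0 - t * v0 = t * 1" using tsum by linarith
    define J where "J = JM2 (coords p)"
    have Je: "J$1$1 = t^3 * J2_11 u0 v0 1" "J$1$2 = t^3 * J2_12 u0 v0 1"
             "J$2$1 = t^3 * J2_21 u0 v0 1" "J$2$2 = t^3 * J2_22 u0 v0 1"
      unfolding J_def JM2_def cp by (simp_all add: p3 homJ2_11[of t u0 v0 1, simplified] homJ2_12[of t u0 v0 1, simplified] homJ2_21[of t u0 v0 1, simplified] homJ2_22[of t u0 v0 1, simplified])
    have tr: "J$1$1 + J$2$2 > 0"
      using sT2[OF ul uh v0(1,2)] tp unfolding Je by (simp add: distrib_left[symmetric])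
    have "J$1$1 * J$2$2 - J$1$2 * J$2$1 = t^6 * (J2_11 u0 v0 1 * J2_22 u0 v0 1 - J2_12 u0 v0 1 * J2_21 u0 v0 1)"
      unfolding Je by (simp add: algebra_simps power_numeral_reduce)
    then have dt: "J$1$1 * J$2$2 - J$1$2 * J$2$1 > 0"
      using sD2[OF ul uh v0(1,2)] tp by simp
    show ?thesis unfolding repelling_def is_jacobian_at_def
      using jac2[of "coords p"] eig_re_pos[OF tr dt] unfolding J_def by blast
  qed
  show ?thesis using pint prest uniq rep by blast
qed


definition "F3_1 x1 x2 x3 = (- (x1^2 * x2) + x1^2 * x3 - x1 * x2^2 + 2 * x1 * x2 * x3 + x1 * x3^2 - x2^3 + x2^2 * x3 + x2 * x3^2 + x3^3 :: real)"
definition "F3_2 x1 x2 x3 = (x1^3 + x1^2 * x2 - x1^2 * x3 + x1 * x2^2 - x1 * x3^2 - x2^2 * x3 - x2 * x3^2 - x3^3 :: real)"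
definition "F3_3 x1 x2 x3 = (- (x1^3) - x1^2 * x2 - x1^2 * x3 - x1 * x2^2 - x1 * x3^2 + x2^3 + x2^2 * x3 + x2 * x3^2 :: real)"
definition "J3_11 x1 x2 x3 = (- (x1^3) - 5 * x1^2 * x2 + x1^2 * x3 - 3 * x1 * x2^2 + 2 * x1 * x2 * x3 - x1 * x3^2 - x2^3 + x2^2 * x3 + x2 * x3^2 + x3^3 :: real)"
definition "J3_12 x1 x2 x3 = (- (2 * x1^3) - 4 * x1^2 * x2 - 4 * x1 * x2^2 - 2 * x1 * x3^2 :: real)"
definition "J3_21 x1 x2 x3 = (4 * x1^2 * x2 + 2 * x1 * x2^2 + 2 * x2^3 + 2 * x2^2 * x3 + 2 * x2 * x3^2 :: real)"
definition "J3_22 x1 x2 x3 = (x1^3 + 3 * x1^2 * x2 - x1^2 * x3 + 3 * x1 * x2^2 + 2 * x1 * x2 * x3 - x1 * x3^2 + x2^3 - x2^2 * x3 + x2 * x3^2 - x3^3 :: real)"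
definition "R3 v = (- (v^7) - v^6 - 8 * v^5 + 16 * v^4 + 8 * v^3 + 16 * v^2 + v + 1 :: real)"
definition "a3 v = (2 * v^2 - 6 * v :: real)"
definition "b3 v = (v^4 + v^3 - 2 * v^2 - 3 * v - 1 :: real)"

definition "JM3 (y::real^2) = (vector [vector [J3_11 (y$1) (y$2) (1-y$1-y$2), J3_12 (y$1) (y$2) (1-y$1-y$2)],
   vector [J3_21 (y$1) (y$2) (1-y$1-y$2), J3_22 (y$1) (y$2) (1-y$1-y$2)]] :: real^2^2)"

lemma ibr_A3: "ibr A3 x = vector [x$1 * F3_1 (x$1) (x$2) (x$3), x$2 * F3_2 (x$1) (x$2) (x$3), x$3 * F3_3 (x$1) (x$2) (x$3)]"
  unfolding vec_eq_iff forall_3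
  by (simp add: ibr_def A3_def F3_1_def F3_2_def F3_3_def sum_3 algebra_simps power2_eq_square power3_eq_cube)

lemma jac3: "(ibr_aff A3 has_derivative (\<lambda>h. JM3 y *v h)) (at y)"
proof (rule deriv2)
  show "((\<lambda>y. ibr_aff A3 y $ 1) has_derivative (\<lambda>h. JM3 y $ 1 $ 1 * h $ 1 + JM3 y $ 1 $ 2 * h $ 2)) (at y)"
    unfolding ibr_aff_def ibr_A3 lift_def JM3_def F3_1_def J3_11_def J3_12_def
    apply simp
    apply (rule derivative_eq_intros refl | simp)+
    apply (rule ext)
    apply (simp add: algebra_simps power2_eq_square power3_eq_cube)
    done
  show "((\<lambda>y. ibr_aff A3 y $ 2) has_derivative (\<lambda>h. JM3 y $ 2 $ 1 * h $ 1 + JM3 y $ 2 $ 2 * h $ 2)) (at y)"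
    unfolding ibr_aff_def ibr_A3 lift_def JM3_def F3_2_def J3_21_def J3_22_def
    apply simp
    apply (rule derivative_eq_intros refl | simp)+
    apply (rule ext)
    apply (simp add: algebra_simps power2_eq_square power3_eq_cube)
    done
qed

lemma hom3_1: "F3_1 (t*x1) (t*x2) (t*x3) = t^3 * F3_1 x1 x2 x3" unfolding F3_1_def by algebra
lemma hom3_2: "F3_2 (t*x1) (t*x2) (t*x3) = t^3 * F3_2 x1 x2 x3" unfolding F3_2_def by algebra
lemma hom3_3: "F3_3 (t*x1) (t*x2) (t*x3) = t^3 * F3_3 x1 x2 x3" unfolding F3_3_def by algebra
lemma homJ3_11: "J3_11 (t*x1) (t*x2) (t*x3) = t^3 * J3_11 x1 x2 x3" unfolding J3_11_def by algebra
lemma homJ3_12: "J3_12 (t*x1) (t*x2) (t*x3) = t^3 * J3_12 x1 x2 x3" unfolding J3_12_def by algebra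
lemma homJ3_21: "J3_21 (t*x1) (t*x2) (t*x3) = t^3 * J3_21 x1 x2 x3" unfolding J3_21_def by algebra
lemma homJ3_22: "J3_22 (t*x1) (t*x2) (t*x3) = t^3 * J3_22 x1 x2 x3" unfolding J3_22_def by algebra
lemma euler3: "x1 * F3_1 x1 x2 x3 + x2 * F3_2 x1 x2 x3 + x3 * F3_3 x1 x2 x3 = 0" unfolding F3_1_def F3_2_def F3_3_def by algebra
lemma I1_3: "R3 v = (- (2 * u^2 * v^2) + 6 * u^2 * v + u * v^4 - u * v^3 + 6 * u * v^2 - 9 * u * v - u + 2 * v^3 + 4 * v^2 - 4 * v + 2) * F3_1 u v 1 + (- (2 * u * v^3) + 8 * u * v^2 - 6 * u * v + v^5 - 2 * v^4 + 7 * v^3 - 11 * v^2 - 4 * v + 1) * F3_2 u v 1" unfolding R3_def F3_1_def F3_2_def F3_3_def by ((simp only: power_one mult_1_right mult_1_left)?, algebra)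
lemma I2_3: "a3 v * u + b3 v = (- (u * v) + u - 2) * F3_1 u v 1 + (- (v^2) + 2 * v - 1) * F3_2 u v 1" unfolding a3_def b3_def F3_1_def F3_2_def F3_3_def by ((simp only: power_one mult_1_right mult_1_left)?, algebra)
lemma I3_3: "(a3 v)^2 * F3_1 u v 1 = (1-v)^2 * R3 v + (a3 v * u + b3 v) * (- (2 * u * v^3) + 8 * u * v^2 - 6 * u * v + v^5 - 2 * v^4 + 7 * v^3 - 11 * v^2 - 4 * v + 1)" unfolding a3_def b3_def R3_def F3_1_def F3_2_def F3_3_def by ((simp only: power_one mult_1_right mult_1_left)?, algebra)
definition "g3 v = (1 / v^5 + 1 / v^4 + 16 / v^3 + 8 / v^2 + 16 / v^1 + -8 + -1 * v^1 + -1 * v^2 :: real)"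
lemma Rg3: "0 < v \<Longrightarrow> R3 v = v^5 * g3 v"
  unfolding R3_def g3_def by (simp add: field_simps power_numeral_reduce)
lemma gdec3: assumes vw: "0 < (v::real)" "v < w" shows "g3 w < g3 v"
proof -
  have d0: "1 / w^5 < 1 / v^5" by (rule inv_pow_less) (use vw in auto)
  have d1: "1 / w^4 < 1 / v^4" by (rule inv_pow_less) (use vw in auto)
  have d2: "16 / w^3 < 16 / v^3" by (rule inv_pow_less) (use vw in auto)
  have d3: "8 / w^2 < 8 / v^2" by (rule inv_pow_less) (use vw in auto)
  have d4: "16 / w^1 < 16 / v^1" by (rule inv_pow_less) (use vw in auto)
  have d6: "1 * v^1 \<le> 1 * w^1" by (rule pow_le_mono) (use vw in auto)
  have d7: "1 * v^2 \<le> 1 * w^2" by (rule pow_le_mono) (use vw in auto)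
  show ?thesis unfolding g3_def using d0 d1 d2 d3 d4 d6 d7 by linarith
qed

lemma root_unique3: assumes "0 < (v::real)" "0 < w" "R3 v = 0" "R3 w = 0" shows "v = w"
proof -
  have "g3 v = 0" "g3 w = 0" using assms Rg3 by auto
  then show ?thesis using gdec3 assms(1,2) by (metis less_irrefl linorder_neqE_linordered_idom)
qed

lemma sa3:
  assumes "(121/100) \<le> (u::real)" "u \<le> (13/10)" "(187/100) \<le> (v::real)" "v \<le> (47/25)"
  shows "a3 v < 0"
proof -
  define t where "t = (u - (121/100)) / (9/100)"
  define w where "w = (v - (187/100)) / (1/100)"
  have t: "0 \<le> t" "t \<le> 1" using assms by (auto simp: t_def field_simps)
  have w: "0 \<le> w" "w \<le> 1" using assms by (auto simp: w_def field_simps)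
  have u: "u = (121/100) + (9/100) * t" and v: "v = (187/100) + (1/100) * w" by (simp_all add: t_def w_def field_simps)
  have eq: "a3 v = ((-21131/5000)) + ((37/2500)) * (w) + ((1/5000)) * (w^2)"
    unfolding u v a3_def by ((simp only: power_one mult_1_right mult_1_left)?, algebra)
  have m1: "w \<le> 1" using mono_bd[OF t w, of 0 1] by simp
  have m2: "w^2 \<le> 1" using mono_bd[OF t w, of 0 2] by simp
  show ?thesis using eq m1 m2 by linarith
qed
lemma sbl3:
  assumes "(121/100) \<le> (u::real)" "u \<le> (13/10)" "(187/100) \<le> (v::real)" "v \<le> (47/25)"
  shows "0 < b3 v + (121/100) * a3 v"
proof -
  define t where "t = (u - (121/100)) / (9/100)"
  define w where "w = (v - (187/100)) / (1/100)"
  have t: "0 \<le> t" "t \<le> 1" using assms by (auto simp: t_def field_simps)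
  have w: "0 \<le> w" "w \<le> 1" using assms by (auto simp: w_def field_simps)
  have u: "u = (121/100) + (9/100) * t" and v: "v = (187/100) + (1/100) * w" by (simp_all add: t_def w_def field_simps)
  have eq: "b3 v + (121/100) * a3 v = ((5001061/100000000)) + ((3494789/12500000)) * (w) + ((135057/50000000)) * (w^2) + ((53/6250000)) * (w^3) + ((1/100000000)) * (w^4)"
    unfolding u v a3_def b3_def by ((simp only: power_one mult_1_right mult_1_left)?, algebra)
  have m1: "0 \<le> w" using mono_nn[OF t(1) w(1), of 0 1] by simp
  have m2: "0 \<le> w^2" using mono_nn[OF t(1) w(1), of 0 2] by simp
  have m3: "0 \<le> w^3" using mono_nn[OF t(1) w(1), of 0 3] by simp
  have m4: "0 \<le> w^4" using mono_nn[OF t(1) w(1), of 0 4] by simp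
  show ?thesis using eq m1 m2 m3 m4 by linarith
qed
lemma sbh3:
  assumes "(121/100) \<le> (u::real)" "u \<le> (13/10)" "(187/100) \<le> (v::real)" "v \<le> (47/25)"
  shows "b3 v + (13/10) * a3 v < 0"
proof -
  define t where "t = (u - (121/100)) / (9/100)"
  define w where "w = (v - (187/100)) / (1/100)"
  have t: "0 \<le> t" "t \<le> 1" using assms by (auto simp: t_def field_simps)
  have w: "0 \<le> w" "w \<le> 1" using assms by (auto simp: w_def field_simps)
  have u: "u = (121/100) + (9/100) * t" and v: "v = (187/100) + (1/100) * w" by (simp_all add: t_def w_def field_simps)
  have eq: "b3 v + (13/10) * a3 v = ((-33034739/100000000)) + ((3511439/12500000)) * (w) + ((135957/50000000)) * (w^2) + ((53/6250000)) * (w^3) + ((1/100000000)) * (w^4)"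
    unfolding u v a3_def b3_def by ((simp only: power_one mult_1_right mult_1_left)?, algebra)
  have m1: "w \<le> 1" using mono_bd[OF t w, of 0 1] by simp
  have m2: "w^2 \<le> 1" using mono_bd[OF t w, of 0 2] by simp
  have m3: "w^3 \<le> 1" using mono_bd[OF t w, of 0 3] by simp
  have m4: "w^4 \<le> 1" using mono_bd[OF t w, of 0 4] by simp
  show ?thesis using eq m1 m2 m3 m4 by linarith
qed
lemma sT3:
  assumes "(121/100) \<le> (u::real)" "u \<le> (13/10)" "(187/100) \<le> (v::real)" "v \<le> (47/25)"
  shows "0 < J3_11 u v 1 + J3_22 u v 1"
proof -
  define t where "t = (u - (121/100)) / (9/100)"
  define w where "w = (v - (187/100)) / (1/100)"
  have t: "0 \<le> t" "t \<le> 1" using assms by (auto simp: t_def field_simps)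
  have w: "0 \<le> w" "w \<le> 1" using assms by (auto simp: w_def field_simps)
  have u: "u = (121/100) + (9/100) * t" and v: "v = (187/100) + (1/100) * w" by (simp_all add: t_def w_def field_simps)
  have eq: "J3_11 u v 1 + J3_22 u v 1 = ((2447533/500000)) + ((19559/500000)) * (w) + ((-80343/250000)) * (t) + ((-189/250000)) * (t * w) + ((-15147/500000)) * (t^2) + ((-81/500000)) * (t^2 * w)"
    unfolding u v J3_11_def J3_12_def J3_21_def J3_22_def by ((simp only: power_one mult_1_right mult_1_left)?, algebra)
  have m1: "0 \<le> w" using mono_nn[OF t(1) w(1), of 0 1] by simp
  have m2: "t \<le> 1" using mono_bd[OF t w, of 1 0] by simp
  have m3: "t * w \<le> 1" using mono_bd[OF t w, of 1 1] by simp
  have m4: "t^2 \<le> 1" using mono_bd[OF t w, of 2 0] by simp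
  have m5: "t^2 * w \<le> 1" using mono_bd[OF t w, of 2 1] by simp
  show ?thesis using eq m1 m2 m3 m4 m5 by linarith
qed
lemma sD3:
  assumes "(121/100) \<le> (u::real)" "u \<le> (13/10)" "(187/100) \<le> (v::real)" "v \<le> (47/25)"
  shows "0 < J3_11 u v 1 * J3_22 u v 1 - J3_12 u v 1 * J3_21 u v 1"
proof -
  define t where "t = (u - (121/100)) / (9/100)"
  define w where "w = (v - (187/100)) / (1/100)"
  have t: "0 \<le> t" "t \<le> 1" using assms by (auto simp: t_def field_simps)
  have w: "0 \<le> w" "w \<le> 1" using assms by (auto simp: w_def field_simps)
  have u: "u = (121/100) + (9/100) * t" and v: "v = (187/100) + (1/100) * w" by (simp_all add: t_def w_def field_simps)
  have eq: "J3_11 u v 1 * J3_22 u v 1 - J3_12 u v 1 * J3_21 u v 1 = ((19825181235511/25000000000)) + ((3047932156159/250000000000)) * (w) + ((2235218151/31250000000)) * (w^2) + ((89237787/500000000000)) * (w^3) + ((16747/500000000000)) * (w^4) + ((-17/25000000000)) * (w^5) + ((-1/1000000000000)) * (w^6) + ((24855666265683/250000000000)) * (t) + ((336587780187/250000000000)) * (t * w) + ((3626163153/500000000000)) * (t * w^2) + ((1988109/100000000000)) * (t * w^3) + ((6813/250000000000)) * (t * w^4) + ((9/500000000000)) * (t * w^5) + ((1013370082317/250000000000)) * (t^2) + ((19625095773/500000000000)) * (t^2 * w) + ((61957953/500000000000)) * (t^2 * w^2) + ((72009/500000000000)) * (t^2 * w^3) + ((-81/1000000000000)) * (t^2 * w^4)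 + ((8290610091/100000000000)) * (t^3) + ((311719671/500000000000)) * (t^3 * w) + ((524151/500000000000)) * (t^3 * w^2) + ((729/500000000000)) * (t^3 * w^3) + ((308367/7812500000)) * (t^4) + ((1397493/500000000000)) * (t^4 * w) + ((-6561/1000000000000)) * (t^4 * w^2) + ((-15529887/500000000000)) * (t^5) + ((-531441/1000000000000)) * (t^6)"
    unfolding u v J3_11_def J3_12_def J3_21_def J3_22_def by ((simp only: power_one mult_1_right mult_1_left)?, algebra)
  have m1: "0 \<le> w" using mono_nn[OF t(1) w(1), of 0 1] by simp
  have m2: "0 \<le> w^2" using mono_nn[OF t(1) w(1), of 0 2] by simp
  have m3: "0 \<le> w^3" using mono_nn[OF t(1) w(1), of 0 3] by simp
  have m4: "0 \<le> w^4" using mono_nn[OF t(1) w(1), of 0 4] by simp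
  have m5: "w^5 \<le> 1" using mono_bd[OF t w, of 0 5] by simp
  have m6: "w^6 \<le> 1" using mono_bd[OF t w, of 0 6] by simp
  have m7: "0 \<le> t" using mono_nn[OF t(1) w(1), of 1 0] by simp
  have m8: "0 \<le> t * w" using mono_nn[OF t(1) w(1), of 1 1] by simp
  have m9: "0 \<le> t * w^2" using mono_nn[OF t(1) w(1), of 1 2] by simp
  have m10: "0 \<le> t * w^3" using mono_nn[OF t(1) w(1), of 1 3] by simp
  have m11: "0 \<le> t * w^4" using mono_nn[OF t(1) w(1), of 1 4] by simp
  have m12: "0 \<le> t * w^5" using mono_nn[OF t(1) w(1), of 1 5] by simp
  have m13: "0 \<le> t^2" using mono_nn[OF t(1) w(1), of 2 0] by simp
  have m14: "0 \<le> t^2 * w" using mono_nn[OF t(1) w(1), of 2 1] by simp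
  have m15: "0 \<le> t^2 * w^2" using mono_nn[OF t(1) w(1), of 2 2] by simp
  have m16: "0 \<le> t^2 * w^3" using mono_nn[OF t(1) w(1), of 2 3] by simp
  have m17: "t^2 * w^4 \<le> 1" using mono_bd[OF t w, of 2 4] by simp
  have m18: "0 \<le> t^3" using mono_nn[OF t(1) w(1), of 3 0] by simp
  have m19: "0 \<le> t^3 * w" using mono_nn[OF t(1) w(1), of 3 1] by simp
  have m20: "0 \<le> t^3 * w^2" using mono_nn[OF t(1) w(1), of 3 2] by simp
  have m21: "0 \<le> t^3 * w^3" using mono_nn[OF t(1) w(1), of 3 3] by simp
  have m22: "0 \<le> t^4" using mono_nn[OF t(1) w(1), of 4 0] by simp
  have m23: "0 \<le> t^4 * w" using mono_nn[OF t(1) w(1), of 4 1] by simp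
  have m24: "t^4 * w^2 \<le> 1" using mono_bd[OF t w, of 4 2] by simp
  have m25: "t^5 \<le> 1" using mono_bd[OF t w, of 5 0] by simp
  have m26: "t^6 \<le> 1" using mono_bd[OF t w, of 6 0] by simp
  show ?thesis using eq m1 m2 m3 m4 m5 m6 m7 m8 m9 m10 m11 m12 m13 m14 m15 m16 m17 m18 m19 m20 m21 m22 m23 m24 m25 m26 by linarith
qed

lemma Rvl3: "R3 (187/100) > 0" by (simp add: R3_def power_divide)
lemma Rvh3: "R3 (47/25) < 0" by (simp add: R3_def power_divide)


lemma rest_iff3: assumes "simplex_interior x"
  shows "rest_point A3 x \<longleftrightarrow> F3_1 (x$1) (x$2) (x$3) = 0 \<and> F3_2 (x$1) (x$2) (x$3) = 0 \<and> F3_3 (x$1) (x$2) (x$3) = 0"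
proof -
  have p: "x$1 > 0" "x$2 > 0" "x$3 > 0" using assms unfolding simplex_interior_def by auto
  show ?thesis unfolding rest_point_def ibr_A3 vec_eq_iff forall_3 using p by simp
qed

lemma game3: "(\<exists>!x. simplex_interior x \<and> rest_point A3 x) \<and>
            (\<forall>x. simplex_interior x \<and> rest_point A3 x \<longrightarrow> repelling A3 x)"
proof -
  have cR: "continuous_on {(187/100)..(47/25)} R3" unfolding R3_def by (intro continuous_intros)
  obtain v0 where v0: "(187/100) \<le> v0" "v0 \<le> (47/25)" "R3 v0 = 0"
    using IVT2'[OF less_imp_le[OF Rvh3] less_imp_le[OF Rvl3] _ cR] by auto
  have av: "a3 v0 < 0" using sa3[of "(121/100)" v0] v0 by simp
  define u0 where "u0 = - b3 v0 / a3 v0"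
  have abu: "a3 v0 * u0 + b3 v0 = 0" using av unfolding u0_def by (simp add: field_simps)
  have bl: "0 < b3 v0 + (121/100) * a3 v0" using sbl3[of "(121/100)" v0] v0 by simp
  have bh: "b3 v0 + (13/10) * a3 v0 < 0" using sbh3[of "(121/100)" v0] v0 by simp
  have ul: "(121/100) \<le> u0"
  proof (rule ccontr)
    assume "\<not> (121/100) \<le> u0"
    then have "u0 * a3 v0 > (121/100) * a3 v0" using av by (intro mult_strict_right_mono_neg) auto
    then show False using abu bl by (simp add: algebra_simps)
  qed
  have uh: "u0 \<le> (13/10)"
  proof (rule ccontr)
    assume "\<not> u0 \<le> (13/10)"
    then have "u0 * a3 v0 < (13/10) * a3 v0" using av by (intro mult_strict_right_mono_neg) auto
    then show False using abu bh by (simp add: algebra_simps)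
  qed
  have f1: "F3_1 u0 v0 1 = 0"
  proof -
    have "(a3 v0)^2 * F3_1 u0 v0 1 = 0" using I3_3[of v0 u0] abu v0(3) by simp
    then show ?thesis using av by simp
  qed
  have f2: "F3_2 u0 v0 1 = 0"
  proof -
    have "(1 - v0)^2 \<noteq> 0" using v0 by simp
    moreover have "a3 v0 * u0 + b3 v0 = - ((1 - v0)^2) * F3_2 u0 v0 1"
      using I2_3[of v0 u0] f1 by (simp add: power2_eq_square algebra_simps)
    ultimately show ?thesis using abu by simp
  qed
  have f3: "F3_3 u0 v0 1 = 0" using euler3[of u0 v0 1] f1 f2 by simp
  have u0p: "u0 > 0" using ul by simp
  have v0p: "v0 > 0" using v0 by simp
  define s where "s = 1 + u0 + v0"
  have sp: "s > 0" using u0p v0p unfolding s_def by simp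
  define t where "t = 1 / s"
  have tp: "t > 0" using sp unfolding t_def by simp
  define p :: "real^3" where "p = vector [t * u0, t * v0, t * 1]"
  have pc: "p$1 = t * u0" "p$2 = t * v0" "p$3 = t * 1" unfolding p_def by simp_all
  have tsum: "t * u0 + t * v0 + t * 1 = 1"
  proof -
    have "t * u0 + t * v0 + t * 1 = t * s" by (simp add: s_def algebra_simps)
    also have "\<dots> = 1" using sp by (simp add: t_def)
    finally show ?thesis .
  qed
  have pint: "simplex_interior p"
    unfolding simplex_interior_def forall_3 sum_3 pc using tp u0p v0p tsum by simp
  have prest: "rest_point A3 p"
    unfolding rest_iff3[OF pint] pc hom3_1 hom3_2 hom3_3 using f1 f2 f3 by simp
  have uniq: "x = p" if xi: "simplex_interior x" and xr: "rest_point A3 x" for x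
  proof -
    have xp: "x$1 > 0" "x$2 > 0" "x$3 > 0" and xs: "x$1 + x$2 + x$3 = 1"
      using xi unfolding simplex_interior_def sum_3 by auto
    define u where "u = x$1 / x$3"
    define v where "v = x$2 / x$3"
    have xe: "x$1 = x$3 * u" "x$2 = x$3 * v" "x$3 = x$3 * 1" using xp unfolding u_def v_def by simp_all
    have up: "u > 0" "v > 0" using xp unfolding u_def v_def by simp_all
    have F: "F3_1 u v 1 = 0" "F3_2 u v 1 = 0"
    proof -
      have "F3_1 (x$3 * u) (x$3 * v) (x$3 * 1) = 0" "F3_2 (x$3 * u) (x$3 * v) (x$3 * 1) = 0"
        using xr unfolding rest_iff3[OF xi] using xe by (metis)+
      then show "F3_1 u v 1 = 0" "F3_2 u v 1 = 0" using xp unfolding hom3_1 hom3_2 by simp_all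
    qed
    have "R3 v = 0" using I1_3[of v u] F by simp
    then have vv: "v = v0" using root_unique3[OF up(2) v0p _ v0(3)] by simp
    have "a3 v * u + b3 v = 0" using I2_3[of v u] F by simp
    then have uu: "u = u0" using av abu vv
      by (metis add_right_cancel mult_cancel_left less_irrefl)
    have "x$3 * s = 1" using xs xe unfolding s_def uu vv by (simp add: algebra_simps)
    then have x3: "x$3 = t" unfolding t_def using sp by (simp add: field_simps)
    show ?thesis unfolding vec_eq_iff forall_3 pc using xe x3 uu vv by simp
  qed
  have rep: "repelling A3 p"
  proof -
    have cp: "coords p = vector [t * u0, t * v0]" unfolding coords_def pc by simp
    have p3: "1 - t * u0 - t * v0 = t * 1" using tsum by linarith
    define J where "J = JM3 (coords p)"
    have Je: "J$1$1 = t^3 * J3_11 u0 v0 1" "J$1$2 = t^3 * J3_12 u0 v0 1"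
             "J$2$1 = t^3 * J3_21 u0 v0 1" "J$2$2 = t^3 * J3_22 u0 v0 1"
      unfolding J_def JM3_def cp by (simp_all add: p3 homJ3_11[of t u0 v0 1, simplified] homJ3_12[of t u0 v0 1, simplified] homJ3_21[of t u0 v0 1, simplified] homJ3_22[of t u0 v0 1, simplified])
    have tr: "J$1$1 + J$2$2 > 0"
      using sT3[OF ul uh v0(1,2)] tp unfolding Je by (simp add: distrib_left[symmetric])
    have "J$1$1 * J$2$2 - J$1$2 * J$2$1 = t^6 * (J3_11 u0 v0 1 * J3_22 u0 v0 1 - J3_12 u0 v0 1 * J3_21 u0 v0 1)"
      unfolding Je by (simp add: algebra_simps power_numeral_reduce)
    then have dt: "J$1$1 * J$2$2 - J$1$2 * J$2$1 > 0"
      using sD3[OF ul uh v0(1,2)] tp by simp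
    show ?thesis unfolding repelling_def is_jacobian_at_def
      using jac3[of "coords p"] eig_re_pos[OF tr dt] unfolding J_def by blast
  qed
  show ?thesis using pint prest uniq rep by blast
qed


theorem proposition5:
  shows "(\<forall>A \<in> {A1, A2, A3}.
            (\<exists>!x. simplex_interior x \<and> rest_point A x) \<and>
            (\<forall>x. simplex_interior x \<and> rest_point A x \<longrightarrow> repelling A x))
         \<and> simplex_interior (vector [1/3, 1/3, 1/3]) \<and> rest_point A1 (vector [1/3, 1/3, 1/3])
         \<and> (\<exists>J. is_jacobian_at A1 (vector [1/3, 1/3, 1/3]) J \<and>
               {z. is_eigenvalue J z} =
                 {(1 + 2 * \<i> * complex_of_real (sqrt 26)) / 27,
                  (1 - 2 * \<i> * complex_of_real (sqrt 26)) / 27})"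
proof -
  have s: "simplex_interior (vector [1/3, 1/3, 1/3]) \<and> rest_point A1 (vector [1/3, 1/3, 1/3])"
    using p1_int p1_rest unfolding p1_def by simp
  have e: "\<exists>J. is_jacobian_at A1 (vector [1/3, 1/3, 1/3]) J \<and>
               {z. is_eigenvalue J z} =
                 {(1 + 2 * \<i> * complex_of_real (sqrt 26)) / 27,
                  (1 - 2 * \<i> * complex_of_real (sqrt 26)) / 27}"
    using p1_jac eig_A1 unfolding p1_def by blast
  show ?thesis using game1 game2 game3 s e by auto
qed

end
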